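(* Let $M=P+\varepsilon D\in\mathbb{DH}[t]$ be monic with $\operatorname{mrpf}(P)=1$, and write $P\overline{P}=\prod_{i=1}^m N_i^{n_i}$ with pairwise coprime, irreducible, monic quadratic polynomials $N_1,\dots,N_m\in\mathbb{R}[t]$ and positive integers $n_1,\dots,n_m$. Then $M$ admits a factorization $M=(t-h_1)(t-h_2)\cdots(t-h_k)$ with $h_1,\dots,h_k\in\mathbb{DH}$ if and only if $\prod_{i=1}^m N_i^{n_i-1}$ divides the norm polynomial $M\overline{M}$ in $\mathbb{D}[t]$ (equivalently, $\prod_{i=1}^m N_i^{n_i-1}$ divides the dual part $P\overline{D}+D\overline{P}$ of $M\overline{M}$ in $\mathbb{R}[t]$).
   Context: $\mathbb{D}=\mathbb{R}[\varepsilon]/\langle\varepsilon^2\rangle$ denotes the dual numbers. $\mathbb{H}$ denotes the real quaternions with basis $1,\mathbf{i},\mathbf{j},\mathbf{k}$, $\mathbf{i}^2=\mathbf{j}^2=\mathbf{k}^2=\mathbf{i}\mathbf{j}\mathbf{k}=-1$. The dual quaternions $\mathbb{DH}$ are the $\mathbb{D}$-algebra $\mathbb{H}\otimes_{\mathbb{R}}\mathbb{D}$ ($\varepsilon$ commutes with $\mathbf{i},\mathbf{j},\mathbf{k}$). The conjugate of $q=q_0+q_1\mathbf{i}+q_2\mathbf{j}+q_3\mathbf{k}$ ($q_i\in\mathbb{D}$) is $\overline{q}=q_0-q_1\mathbf{i}-q_2\mathbf{j}-q_3\mathbf{k}$. $\mathbb{DH}[t]$ is the ring of polynomials with dual quaternion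 coefficients in which $t$ commutes with all coefficients. For $M=\sum m_it^i$, $\overline{M}=\sum\overline{m_i}t^i$ and the norm polynomial is $M\overline{M}=\overline{M}M\in\mathbb{D}[t]$. Every $M\in\mathbb{DH}[t]$ is written $M=P+\varepsilon D$ with $P,D\in\mathbb{H}[t]$ (primal and dual part); then $M\overline{M}=P\overline{P}+\varepsilon(P\overline{D}+D\overline{P})$. For $P\in\mathbb{H}[t]$, $\operatorname{mrpf}(P)$ denotes the maximal (monic) real polynomial factor of $P$, i.e. the monic $c\in\mathbb{R}[t]$ of largest degree with $P=cP'$ for some $P'\in\mathbb{H}[t]$; $\operatorname{mrpf}(P)=1$ means $P$ has no real polynomial factor of positive degree. *)

theory Defs
  imports "HOL-Computational_Algebra.Polynomial"
begin

text \<open>Real quaternions q0 + q1 i + q2 j + q3 k and dual quaternions p + eps d.\<close>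
datatype quat = Quat real real real real
datatype dquat = DQuat quat quat

text \<open>Quaternion polynomials in H[t], represented by their four real component
  polynomials p0 + p1 i + p2 j + p3 k (t is central, so this is exact).\<close>
datatype hpoly = HP "real poly" "real poly" "real poly" "real poly"

text \<open>Dual quaternion polynomials M = P + eps D in DH[t].\<close>
datatype dhpoly = DHP hpoly hpoly

fun hp_add :: "hpoly \<Rightarrow> hpoly \<Rightarrow> hpoly" where
  "hp_add (HP a0 a1 a2 a3) (HP b0 b1 b2 b3) = HP (a0+b0) (a1+b1) (a2+b2) (a3+b3)"

fun hp_mult :: "hpoly \<Rightarrow> hpoly \<Rightarrow> hpoly" where
  "hp_mult (HP a0 a1 a2 a3) (HP b0 b1 b2 b3) =
     HP (a0*b0 - a1*b1 - a2*b2 - a3*b3)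
        (a0*b1 + a1*b0 + a2*b3 - a3*b2)
        (a0*b2 - a1*b3 + a2*b0 + a3*b1)
        (a0*b3 + a1*b2 - a2*b1 + a3*b0)"

fun hp_cnj :: "hpoly \<Rightarrow> hpoly" where
  "hp_cnj (HP a0 a1 a2 a3) = HP a0 (-a1) (-a2) (-a3)"

definition hp_of_real :: "real poly \<Rightarrow> hpoly" where
  "hp_of_real c = HP c 0 0 0"

definition hp_zero :: hpoly where "hp_zero = HP 0 0 0 0"
definition hp_one :: hpoly where "hp_one = HP 1 0 0 0"

fun dhp_mult :: "dhpoly \<Rightarrow> dhpoly \<Rightarrow> dhpoly" where
  "dhp_mult (DHP P D) (DHP P' D') = DHP (hp_mult P P') (hp_add (hp_mult P D') (hp_mult D P'))"

fun dhp_cnj :: "dhpoly \<Rightarrow> dhpoly" where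
  "dhp_cnj (DHP P D) = DHP (hp_cnj P) (hp_cnj D)"

definition dhp_one :: dhpoly where "dhp_one = DHP hp_one hp_zero"

definition dhp_of_dual :: "real poly \<Rightarrow> real poly \<Rightarrow> dhpoly" where
  "dhp_of_dual a b = DHP (hp_of_real a) (hp_of_real b)"

text \<open>The linear polynomial t - h for a dual quaternion h.\<close>
fun lin_factor :: "dquat \<Rightarrow> dhpoly" where
  "lin_factor (DQuat (Quat a0 a1 a2 a3) (Quat b0 b1 b2 b3)) =
     DHP (HP [:-a0, 1:] [:-a1:] [:-a2:] [:-a3:]) (HP [:-b0:] [:-b1:] [:-b2:] [:-b3:])"

definition lin_prod :: "dquat list \<Rightarrow> dhpoly" where
  "lin_prod hs = foldr (\<lambda>h acc. dhp_mult (lin_factor h) acc) hs dhp_one"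

fun dhp_degree :: "dhpoly \<Rightarrow> nat" where
  "dhp_degree (DHP (HP p0 p1 p2 p3) (HP d0 d1 d2 d3)) =
     Max {degree p0, degree p1, degree p2, degree p3, degree d0, degree d1, degree d2, degree d3}"

fun dhp_coeff :: "dhpoly \<Rightarrow> nat \<Rightarrow> dquat" where
  "dhp_coeff (DHP (HP p0 p1 p2 p3) (HP d0 d1 d2 d3)) n =
     DQuat (Quat (coeff p0 n) (coeff p1 n) (coeff p2 n) (coeff p3 n))
           (Quat (coeff d0 n) (coeff d1 n) (coeff d2 n) (coeff d3 n))"

definition dhp_monic :: "dhpoly \<Rightarrow> bool" where
  "dhp_monic M \<longleftrightarrow> dhp_coeff M (dhp_degree M) = DQuat (Quat 1 0 0 0) (Quat 0 0 0 0)"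

fun hp_scale :: "real poly \<Rightarrow> hpoly \<Rightarrow> hpoly" where
  "hp_scale c (HP a0 a1 a2 a3) = HP (c*a0) (c*a1) (c*a2) (c*a3)"

text \<open>mrpf(P) = 1: P has no real polynomial factor of positive degree.\<close>
definition mrpf_one :: "hpoly \<Rightarrow> bool" where
  "mrpf_one P \<longleftrightarrow> \<not> (\<exists>c P'. degree c > 0 \<and> P = hp_scale c P')"

end

theory Submission
  imports Defs "HOL-Computational_Algebra.Polynomial_Factorial" "HOL-Computational_Algebra.Field_as_Ring"
begin


datatype 'a q4 = Q4 'a 'a 'a 'a

instantiation q4 :: (comm_ring_1) ring_1
begin
definition "zero_q4 = Q4 0 0 0 0"
definition "one_q4 = Q4 1 0 0 0"
fun plus_q4 :: "'a q4 \<Rightarrow> 'a q4 \<Rightarrow> 'a q4" where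
  "plus_q4 (Q4 a0 a1 a2 a3) (Q4 b0 b1 b2 b3) = Q4 (a0+b0) (a1+b1) (a2+b2) (a3+b3)"
fun times_q4 :: "'a q4 \<Rightarrow> 'a q4 \<Rightarrow> 'a q4" where
  "times_q4 (Q4 a0 a1 a2 a3) (Q4 b0 b1 b2 b3) =
     Q4 (a0*b0 - a1*b1 - a2*b2 - a3*b3)
        (a0*b1 + a1*b0 + a2*b3 - a3*b2)
        (a0*b2 - a1*b3 + a2*b0 + a3*b1)
        (a0*b3 + a1*b2 - a2*b1 + a3*b0)"
fun uminus_q4 :: "'a q4 \<Rightarrow> 'a q4" where
  "uminus_q4 (Q4 a0 a1 a2 a3) = Q4 (-a0) (-a1) (-a2) (-a3)"
definition minus_q4 :: "'a q4 \<Rightarrow> 'a q4 \<Rightarrow> 'a q4" where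
  "minus_q4 a b = a + (- b)"
instance
proof
  fix a b c :: "'a q4"
  show "a * b * c = a * (b * c)"
    by (cases a; cases b; cases c) (simp add: algebra_simps)
  show "a + b + c = a + (b + c)"
    by (cases a; cases b; cases c) (simp add: algebra_simps)
  show "a + b = b + a"
    by (cases a; cases b) (simp add: algebra_simps)
  show "0 + a = a"
    by (cases a) (simp add: zero_q4_def)
  show "- a + a = 0"
    by (cases a) (simp add: zero_q4_def)
  show "a - b = a + - b" by (simp add: minus_q4_def)
  show "1 * a = a"
    by (cases a) (simp add: one_q4_def)
  show "a * 1 = a"
    by (cases a) (simp add: one_q4_def)
  show "(a + b) * c = a * c + b * c"
    by (cases a; cases b; cases c) (simp add: algebra_simps)
  show "a * (b + c) = a * b + a * c"
    by (cases a; cases b; cases c) (simp add: algebra_simps)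
  show "(0::'a q4) \<noteq> 1" by (simp add: zero_q4_def one_q4_def)
qed
end

lemma Q4_0: "(0::'a::comm_ring_1 q4) = Q4 0 0 0 0" by (simp add: zero_q4_def)
lemma Q4_1: "(1::'a::comm_ring_1 q4) = Q4 1 0 0 0" by (simp add: one_q4_def)
lemma Q4_minus: "Q4 a0 a1 a2 a3 - Q4 b0 b1 b2 b3 = Q4 (a0-b0) (a1-b1) (a2-b2) (a3-b3)"
  for a0 :: "'a::comm_ring_1" by (simp add: minus_q4_def)

fun qcnj :: "'a::idom q4 \<Rightarrow> 'a q4" where "qcnj (Q4 a b c d) = Q4 a (-b) (-c) (-d)"
fun qnu :: "'a::idom q4 \<Rightarrow> 'a" where "qnu (Q4 a b c d) = a*a + b*b + c*c + d*d"
definition qsc :: "'a::idom \<Rightarrow> 'a q4" where "qsc c = Q4 c 0 0 0"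
fun qdot :: "'a::idom q4 \<Rightarrow> 'a q4 \<Rightarrow> 'a" where
  "qdot (Q4 a0 a1 a2 a3) (Q4 b0 b1 b2 b3) = a0*b0 + a1*b1 + a2*b2 + a3*b3"
fun qre :: "'a q4 \<Rightarrow> 'a" where "qre (Q4 a _ _ _) = a"
fun qmap :: "('a \<Rightarrow> 'b) \<Rightarrow> 'a q4 \<Rightarrow> 'b q4" where
  "qmap f (Q4 a b c d) = Q4 (f a) (f b) (f c) (f d)"

lemma qcnj_mult: "qcnj (x*y) = qcnj y * qcnj x"
  by (induct x; induct y; simp only: times_q4.simps plus_q4.simps uminus_q4.simps qcnj.simps qnu.simps qdot.simps qre.simps qsc_def q4.inject Q4_minus; (intro conjI)?; algebra)
lemma qcnj_add: "qcnj (x+y) = qcnj x + qcnj y"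
  by (induct x; induct y) simp
lemma qcnj_uminus: "qcnj (-x) = - qcnj x"
  by (cases x) simp
lemma qcnj_diff: "qcnj (x-y) = qcnj x - qcnj y"
  by (induct x; induct y) (simp add: Q4_minus)
lemma qcnj_qcnj[simp]: "qcnj (qcnj x) = x"
  by (cases x) simp
lemma mult_qcnj: "x * qcnj x = qsc (qnu x)"
  by (induct x; simp only: times_q4.simps plus_q4.simps uminus_q4.simps qcnj.simps qnu.simps qdot.simps qre.simps qsc_def q4.inject Q4_minus; (intro conjI)?; algebra)
lemma qcnj_mult_self: "qcnj x * x = qsc (qnu x)"
  by (induct x; simp only: times_q4.simps plus_q4.simps uminus_q4.simps qcnj.simps qnu.simps qdot.simps qre.simps qsc_def q4.inject Q4_minus; (intro conjI)?; algebra)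
lemma qsc_comm: "qsc c * x = x * qsc c"
  by (induct x; simp only: times_q4.simps plus_q4.simps uminus_q4.simps qcnj.simps qnu.simps qdot.simps qre.simps qsc_def q4.inject Q4_minus; (intro conjI)?; algebra)
lemma polar: "x * qcnj w + w * qcnj x = qsc (2 * qdot x w)"
  by (induct x; induct w; simp only: times_q4.simps plus_q4.simps uminus_q4.simps qcnj.simps qnu.simps qdot.simps qre.simps qsc_def q4.inject Q4_minus; (intro conjI)?; algebra)
lemma qnu_mult: "qnu (x*y) = qnu x * qnu y"
  by (induct x; induct y; simp only: times_q4.simps plus_q4.simps uminus_q4.simps qcnj.simps qnu.simps qdot.simps qre.simps qsc_def q4.inject Q4_minus; (intro conjI)?; algebra)
lemma qnu_add: "qnu (x+y) = qnu x + qnu y + 2*qdot x y"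
  by (induct x; induct y; simp only: times_q4.simps plus_q4.simps uminus_q4.simps qcnj.simps qnu.simps qdot.simps qre.simps qsc_def q4.inject Q4_minus; (intro conjI)?; algebra)
lemma qdot_cnj: "qdot (qcnj x) w = qre (x*w)"
  by (induct x; induct w; simp only: times_q4.simps plus_q4.simps uminus_q4.simps qcnj.simps qnu.simps qdot.simps qre.simps qsc_def q4.inject Q4_minus; (intro conjI)?; algebra)
lemma qnu_cnj: "qnu (qcnj x) = qnu x"
  by (cases x) simp
lemma qcnj_qsc[simp]: "qcnj (qsc c) = qsc c" by (simp add: qsc_def)

lemma qsc_mult: "qsc a * qsc b = qsc (a*b)"
  by (simp add: qsc_def)
lemma qsc_0[simp]: "qsc 0 = 0" by (simp add: qsc_def Q4_0)
lemma qsc_1[simp]: "qsc 1 = 1" by (simp add: qsc_def Q4_1)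
lemma qsc_add: "qsc (a+b) = qsc a + qsc b" by (simp add: qsc_def)
lemma qsc_uminus: "qsc (-a) = - qsc a" by (simp add: qsc_def)
lemma qsc_diff: "qsc (a-b) = qsc a - qsc b" by (simp add: qsc_def Q4_minus)
lemma qsc_inj[simp]: "qsc a = qsc b \<longleftrightarrow> a = b" by (simp add: qsc_def)
lemma qsc_eq0[simp]: "qsc a = 0 \<longleftrightarrow> a = 0" by (simp add: qsc_def Q4_0)

lemma qsc_mult_zero: fixes c :: "'a::idom" assumes "c \<noteq> 0" "qsc c * x = 0" shows "x = 0"
  using assms by (cases x) (simp add: qsc_def Q4_0)

lemma qdot_dot: "2 * qdot x w = qre (x * qcnj w + w * qcnj x)"
  by (induct x; induct w; simp only: times_q4.simps plus_q4.simps uminus_q4.simps qcnj.simps qnu.simps qdot.simps qre.simps qsc_def q4.inject Q4_minus; (intro conjI)?; algebra)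

lemma dual_norm_mult:
  fixes X Y D1 D2 :: "'a::idom q4"
  shows "qdot (X*Y) (X*D2 + D1*Y) = qdot X D1 * qnu Y + qnu X * qdot Y D2"
  by (induct X; induct Y; induct D1; induct D2; simp only: times_q4.simps plus_q4.simps uminus_q4.simps qcnj.simps qnu.simps qdot.simps qre.simps qsc_def q4.inject Q4_minus; algebra)


fun toq :: "hpoly \<Rightarrow> real poly q4" where "toq (HP a b c d) = Q4 a b c d"
fun ofq :: "real poly q4 \<Rightarrow> hpoly" where "ofq (Q4 a b c d) = HP a b c d"
lemma ofq_toq[simp]: "ofq (toq X) = X" by (cases X) simp
lemma toq_ofq[simp]: "toq (ofq X) = X" by (cases X) simp
lemma toq_inj: "toq X = toq Y \<longleftrightarrow> X = Y" by (metis ofq_toq)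
lemma toq_mult: "toq (hp_mult X Y) = toq X * toq Y" by (cases X; cases Y) simp
lemma toq_add: "toq (hp_add X Y) = toq X + toq Y" by (cases X; cases Y) simp
lemma toq_cnj: "toq (hp_cnj X) = qcnj (toq X)" by (cases X) simp
lemma toq_real: "toq (hp_of_real c) = qsc c" by (simp add: hp_of_real_def qsc_def)
lemma toq_scale: "toq (hp_scale c X) = qsc c * toq X" by (cases X) (simp add: qsc_def)
lemma toq_one: "toq hp_one = 1" by (simp add: hp_one_def Q4_1)
lemma toq_zero: "toq hp_zero = 0" by (simp add: hp_zero_def Q4_0)

definition cev :: "complex \<Rightarrow> real poly \<Rightarrow> complex" where
  "cev l f = poly (map_poly complex_of_real f) l"

lemma map_poly_of_real_add: "map_poly complex_of_real (p + q) = map_poly of_real p + map_poly of_real q"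
  by (rule poly_eqI) (simp add: coeff_map_poly)

lemma cev_add[simp]: "cev l (p + q) = cev l p + cev l q"
  by (simp add: cev_def map_poly_of_real_add)

lemma cev_uminus[simp]: "cev l (- p) = - cev l p"
proof -
  have "map_poly complex_of_real (- p) = - map_poly of_real p"
    by (rule poly_eqI) (simp add: coeff_map_poly)
  then show ?thesis by (simp add: cev_def)
qed

lemma cev_diff[simp]: "cev l (p - q) = cev l p - cev l q"
  using cev_add[of l p "-q"] by simp

lemma cev_pCons[simp]: "cev l (pCons a p) = of_real a + l * cev l p"
  by (simp add: cev_def map_poly_pCons)

lemma cev_mult[simp]: "cev l (p * q) = cev l p * cev l q"
proof (induction p rule: pCons_induct)
  case 0 then show ?case by (simp add: cev_def)
next
  case (pCons a p)
  have "map_poly complex_of_real (smult a q) = smult (of_real a) (map_poly of_real q)"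
    by (rule poly_eqI) (simp add: coeff_map_poly)
  then have "cev l (smult a q) = of_real a * cev l q" by (simp add: cev_def)
  then show ?case using pCons.IH
    by (simp add: algebra_simps)
qed

lemma cev_0[simp]: "cev l 0 = 0" by (simp add: cev_def)
lemma cev_1[simp]: "cev l 1 = 1" by (simp add: cev_def)
lemma cev_power[simp]: "cev l (p ^ k) = cev l p ^ k"
  by (induction k) simp_all
lemma cev_2[simp]: "cev l 2 = 2"
  by (simp only: one_add_one[symmetric] cev_add cev_1)

definition hev :: "complex \<Rightarrow> real poly q4 \<Rightarrow> complex q4" where
  "hev l X = qmap (cev l) X"

lemma hev_mult: "hev l (X * Y) = hev l X * hev l Y"
  by (induct X; induct Y) (simp add: hev_def)
lemma hev_add: "hev l (X + Y) = hev l X + hev l Y"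
  by (induct X; induct Y) (simp add: hev_def)
lemma hev_diff: "hev l (X - Y) = hev l X - hev l Y"
  by (induct X; induct Y) (simp add: hev_def Q4_minus)
lemma hev_uminus: "hev l (- X) = - hev l X"
  by (induct X) (simp add: hev_def)
lemma hev_cnj: "hev l (qcnj X) = qcnj (hev l X)"
  by (induct X) (simp add: hev_def)
lemma hev_sc: "hev l (qsc c) = qsc (cev l c)"
  by (simp add: hev_def qsc_def)
lemma hev_0: "hev l 0 = 0" by (simp add: hev_def Q4_0)

definition qc :: "real q4 \<Rightarrow> real poly q4" where "qc x = qmap (\<lambda>a. [:a:]) x"
definition T :: "real poly q4" where "T = qsc [:0,1:]"

lemma pc_mult: "[:a:] * [:b:] = [:a * b::real:]" by simp
lemma pc_add: "[:a:] + [:b:] = [:a + b::real:]" by simp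
lemma pc_diff: "[:a:] - [:b:] = [:a - b::real:]" by (simp add: diff_pCons)  
lemma pc_uminus: "- [:a:] = [:- a::real:]" by simp
lemmas pc_simps = pc_mult pc_add pc_diff pc_uminus

lemma qc_mult: "qc (x * y) = qc x * qc y"
  by (induct x; induct y) (simp add: qc_def pc_simps)
lemma qc_add: "qc (x + y) = qc x + qc y"
  by (induct x; induct y) (simp add: qc_def pc_simps)
lemma qc_diff: "qc (x - y) = qc x - qc y"
  by (induct x; induct y) (simp add: qc_def pc_simps Q4_minus)
lemma qc_uminus: "qc (- x) = - qc x"
  by (induct x) (simp add: qc_def pc_simps)
lemma qc_cnj: "qc (qcnj x) = qcnj (qc x)"
  by (induct x) (simp add: qc_def pc_simps)
lemma qc_sc: "qc (qsc a) = qsc [:a:]"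
  by (simp add: qc_def qsc_def)
lemma hev_qc: "hev l (qc x) = qmap complex_of_real x"
  by (induct x) (simp add: hev_def qc_def)
lemma hev_T: "hev l T = qsc l"
  by (simp add: T_def hev_sc)

lemma ofr_mult: "qmap complex_of_real (x * y) = qmap of_real x * qmap of_real y"
  by (induct x; induct y) simp
lemma ofr_add: "qmap complex_of_real (x + y) = qmap of_real x + qmap of_real y"
  by (induct x; induct y) simp
lemma ofr_cnj: "qmap complex_of_real (qcnj x) = qcnj (qmap of_real x)"
  by (induct x) simp

lemma L_norm: "(T - qc p) * qcnj (T - qc p) = qsc [:qnu p, - 2 * qre p, 1:]"
proof -
  have e1: "qc p + qc (qcnj p) = qsc [:2 * qre p:]"
    by (induct p) (simp add: qc_def qsc_def)
  have e2: "qc p * qc (qcnj p) = qsc [:qnu p:]"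
    by (simp add: qc_mult[symmetric] mult_qcnj qc_sc)
  have Tc: "qc p * T = T * qc p" by (simp add: T_def qsc_comm)
  have cT: "qcnj T = T" by (simp add: T_def)
  have "(T - qc p) * qcnj (T - qc p) = (T - qc p) * (T - qc (qcnj p))"
    by (simp only: qcnj_diff cT qc_cnj)
  also have "\<dots> = T * T - T * (qc p + qc (qcnj p)) + qc p * qc (qcnj p)"
    by (simp add: algebra_simps Tc)
  also have "\<dots> = qsc ([:0,1:] * [:0,1:] - [:0,1:] * [:2 * qre p:] + [:qnu p:])"
    by (simp add: e1 e2 T_def qsc_mult flip: qsc_diff qsc_add)
  also have "[:0,1:] * [:0,1:] - [:0,1:] * [:2 * qre p:] + [:qnu p:] = [:qnu p, - 2 * qre p, 1:]"
    by simp
  finally show ?thesis .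
qed


lemma qsc_mult_Q4: "qsc c * Q4 a b d e = Q4 (c*a) (c*b) (c*d) (c*e)" for c :: "'a::idom"
  by (simp add: qsc_def)

definition qdvd :: "real poly \<Rightarrow> real poly q4 \<Rightarrow> bool" where
  "qdvd N X \<longleftrightarrow> (\<exists>S. X = qsc N * S)"

lemma qdvd_iff: "qdvd N (Q4 a b c d) \<longleftrightarrow> N dvd a \<and> N dvd b \<and> N dvd c \<and> N dvd d"
proof
  assume "qdvd N (Q4 a b c d)"
  then obtain S where "Q4 a b c d = qsc N * S" by (auto simp: qdvd_def)
  then show "N dvd a \<and> N dvd b \<and> N dvd c \<and> N dvd d" by (cases S) (auto simp: qsc_mult_Q4)
next
  assume "N dvd a \<and> N dvd b \<and> N dvd c \<and> N dvd d"
  then obtain a' b' c' d' where "a = N*a'" "b = N*b'" "c = N*c'" "d = N*d'"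
    by (auto elim!: dvdE)
  then show "qdvd N (Q4 a b c d)" unfolding qdvd_def
    by (intro exI[of _ "Q4 a' b' c' d'"]) (simp add: qsc_mult_Q4)
qed

lemma real_lin_zero:
  assumes "Im l \<noteq> 0" "complex_of_real u + complex_of_real v * l = 0"
  shows "u = 0 \<and> v = 0"
proof -
  have "v * Im l = 0" using arg_cong[OF assms(2), of Im] by simp
  then have "v = 0" using assms(1) by simp
  then show ?thesis using assms(2) by simp
qed

lemma cdecomp:
  assumes "Im l \<noteq> 0"
  shows "\<exists>x y::real. z = of_real x + of_real y * l"
proof -
  define y where "y = Im z / Im l"
  define x where "x = Re z - y * Re l"
  have "z = of_real x + of_real y * l"
    using assms by (simp add: complex_eq_iff x_def y_def)
  then show ?thesis by blast
qed

lemma qdecomp: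
  assumes "Im l \<noteq> 0"
  shows "\<exists>B0 B1. \<beta> = qmap complex_of_real B0 + qsc l * qmap complex_of_real B1"
proof (induct \<beta>)
  case (Q4 z0 z1 z2 z3)
  obtain x0 y0 where 0: "z0 = of_real x0 + of_real y0 * l" using cdecomp[OF assms] by blast
  obtain x1 y1 where 1: "z1 = of_real x1 + of_real y1 * l" using cdecomp[OF assms] by blast
  obtain x2 y2 where 2: "z2 = of_real x2 + of_real y2 * l" using cdecomp[OF assms] by blast
  obtain x3 y3 where 3: "z3 = of_real x3 + of_real y3 * l" using cdecomp[OF assms] by blast
  show ?case
    by (rule exI[of _ "Q4 x0 x1 x2 x3"], rule exI[of _ "Q4 y0 y1 y2 y3"])
       (simp add: 0 1 2 3 qsc_mult_Q4 mult.commute)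
qed

lemma not_unit_deg: "degree (p::real poly) > 0 \<Longrightarrow> \<not> is_unit p"
  using is_unit_iff_degree[of p] by (cases "p = 0") auto

lemma root_exists:
  fixes N :: "real poly"
  assumes irr: "irreducible N" and deg: "degree N = 2" and mon: "lead_coeff N = 1"
  obtains l where "Im l \<noteq> 0" "\<And>f. cev l f = 0 \<longleftrightarrow> N dvd f"
    "N = [:coeff N 0, coeff N 1, 1:]"
proof -
  define c0 where "c0 = coeff N 0"
  define b where "b = coeff N 1"
  have Neq: "N = [:c0, b, 1:]"
  proof (rule poly_eqI)
    fix n show "coeff N n = coeff [:c0, b, 1:] n"
    proof (cases n)
      case 0 then show ?thesis by (simp add: c0_def)
    next
      case (Suc m)
      show ?thesis
      proof (cases m)
        case 0 then show ?thesis using Suc by (simp add: b_def)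
      next
        case (Suc k)
        show ?thesis
        proof (cases k)
          case 0 then show ?thesis using Suc \<open>n = Suc m\<close> mon deg by (simp add: numeral_2_eq_2)
        next
          case (Suc j)
          then have "coeff N n = 0" using \<open>n = Suc m\<close> \<open>m = Suc k\<close> deg by (simp add: coeff_eq_0)
          then show ?thesis using Suc \<open>n = Suc m\<close> \<open>m = Suc k\<close> by simp
        qed
      qed
    qed
  qed
  have N0: "N \<noteq> 0" using deg by auto
  have noroot: "poly N x \<noteq> 0" for x
  proof
    assume "poly N x = 0"
    then have "[:-x,1:] dvd N" by (simp add: poly_eq_0_iff_dvd)
    then obtain q where q: "N = [:-x,1:] * q" by (elim dvdE)
    have "is_unit [:-x,1:] \<or> is_unit q" using irreducibleD[OF irr q] .
    moreover have "\<not> is_unit [:-x,1:]" by (rule not_unit_deg) simp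
    moreover have "q \<noteq> 0" using q N0 by auto
    then have "degree N = degree [:-x,1:] + degree q" unfolding q
      by (intro degree_mult_eq) auto
    then have "degree N = 1 + degree q" by simp
    then have "\<not> is_unit q" using deg by (intro not_unit_deg) simp
    ultimately show False by blast
  qed
  have disc: "b^2 - 4*c0 < 0"
  proof (rule ccontr)
    assume "\<not> b^2 - 4*c0 < 0"
    then have s: "(sqrt (b^2 - 4*c0))^2 = b^2 - 4*c0" by simp
    define x where "x = (-b + sqrt (b^2 - 4*c0))/2"
    have "poly N x = c0 + b * x + x^2" by (simp add: Neq algebra_simps power2_eq_square)
    also have "\<dots> = 0" unfolding x_def using s by (simp add: power2_eq_square field_simps) 
    finally show False using noroot by blast
  qed
  define y where "y = sqrt (4*c0 - b^2)/2"
  have ypos: "y > 0" using disc by (simp add: y_def)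
  have y2: "y * y = c0 - b^2/4"
  proof -
    have "(sqrt (4*c0 - b^2))^2 = 4*c0 - b^2" using disc by simp
    then show ?thesis by (simp add: y_def power2_eq_square field_simps)
  qed
  define l where "l = Complex (-b/2) y"
  have Nl: "cev l N = 0"
    using y2 by (simp add: Neq l_def complex_eq_iff power2_eq_square algebra_simps)
  show ?thesis
  proof (rule that[of l])
    show "Im l \<noteq> 0" using ypos by (simp add: l_def)
    show "N = [:coeff N 0, coeff N 1, 1:]" using Neq by (simp add: c0_def b_def)
    fix f show "cev l f = 0 \<longleftrightarrow> N dvd f"
    proof
      assume "N dvd f" then obtain g where "f = N * g" by (elim dvdE)
      then show "cev l f = 0" by (simp add: Nl)
    next
      assume cf: "cev l f = 0"
      define r where "r = f mod N"
      have fr: "f = (f div N) * N + r" by (simp add: r_def)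
      have cr: "cev l r = 0" using cf Nl by (subst (asm) fr) simp
      have dr: "degree r \<le> 1"
      proof (cases "r = 0")
        case False then show ?thesis using degree_mod_less[OF N0, of f] deg by (simp add: r_def)
      qed simp
      have req: "r = [:coeff r 0, coeff r 1:]"
      proof (rule poly_eqI)
        fix n show "coeff r n = coeff [:coeff r 0, coeff r 1:] n"
          using dr by (cases n; cases "n - 1") (auto simp: coeff_eq_0)
      qed
      have "of_real (coeff r 0) + of_real (coeff r 1) * l = 0"
        using cr by (subst (asm) req) (simp add: mult.commute)
      with real_lin_zero[OF \<open>Im l \<noteq> 0\<close>] have "coeff r 0 = 0 \<and> coeff r 1 = 0" by blast
      then have "r = 0" using req by simp
      then show "N dvd f" by (simp add: r_def mod_eq_0_iff_dvd)
    qed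
  qed
qed

lemma hev_zero_dvd:
  assumes ev: "\<And>f. cev l f = 0 \<longleftrightarrow> N dvd f" and h: "hev l X = 0"
  shows "qdvd N X"
  using h by (induct X) (simp add: hev_def Q4_0 qdvd_iff ev)

lemma right_div:
  assumes ev: "\<And>f. cev l f = 0 \<longleftrightarrow> N dvd f" and N0: "N \<noteq> 0"
    and LN: "L * qcnj L = qsc N"
    and F: "hev l F * hev l (qcnj L) = 0"
  shows "\<exists>G. F = G * L"
proof -
  have "hev l (F * qcnj L) = 0" using F by (simp add: hev_mult)
  then have "qdvd N (F * qcnj L)" by (rule hev_zero_dvd[OF ev])
  then obtain G where G: "F * qcnj L = qsc N * G" by (auto simp: qdvd_def)
  have cLL: "qcnj L * L = qsc N" using LN by (simp add: mult_qcnj qcnj_mult_self)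
  have "qsc N * F = F * qsc N" by (rule qsc_comm)
  also have "\<dots> = F * qcnj L * L" by (simp add: mult.assoc cLL)
  also have "\<dots> = qsc N * (G * L)" by (simp add: G mult.assoc)
  finally have "qsc N * (F - G * L) = 0" by (simp add: right_diff_distrib)
  then have "F - G*L = 0" using N0 qsc_mult_zero by blast
  then show ?thesis by auto
qed


section \<open>Core algebra in complex quaternions\<close>

lemma core_cq:
  fixes X Y v :: "complex q4"
  assumes nv: "qnu v = 0" and XvnZ: "X * v \<noteq> 0" and Xnz: "X \<noteq> 0"
    and cond: "qnu X \<noteq> 0 \<or> (X*v) * qcnj Y + Y * qcnj (X*v) = 0"
  shows "\<exists>\<beta>. (Y + X*\<beta>) * qcnj v = 0"
proof (cases "qnu X \<noteq> 0")
  case True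
  define \<beta> where "\<beta> = - (qsc (1 / qnu X) * qcnj X * Y)"
  have "X * \<beta> = - (qsc (1 / qnu X) * (X * qcnj X) * Y)"
    unfolding \<beta>_def by (simp add: mult.assoc qsc_comm[of _ X] flip: mult.assoc)
  also have "\<dots> = - Y" using True by (simp add: mult_qcnj qsc_mult)
  finally show ?thesis by (intro exI[of _ \<beta>]) simp
next
  case False
  then have nX: "qnu X = 0" by simp
  with cond have c: "(X*v) * qcnj Y + Y * qcnj (X*v) = 0" by simp
  define u where "u = qcnj v"
  have c2: "Y * (u * qcnj X) = - (X * (v * qcnj Y))"
    using c by (simp add: u_def qcnj_mult mult.assoc eq_neg_iff_add_eq_0 add.commute)
  define Z where "Z = qcnj X * Y * u"
  have Z1: "Z * qcnj X = 0"
  proof -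
    have "Z * qcnj X = qcnj X * (Y * u * qcnj X)" by (simp add: Z_def mult.assoc)
    also have "\<dots> = - ((qcnj X * X) * (v * qcnj Y))" by (simp add: c2 mult.assoc)
    also have "\<dots> = 0" by (simp add: qcnj_mult_self nX)
    finally show ?thesis .
  qed
  have Z2: "Z * v = 0"
    by (simp add: Z_def u_def mult.assoc qcnj_mult_self nv)
  obtain g0 g1 g2 g3 where g: "X * v = Q4 g0 g1 g2 g3" by (cases "X * v")
  define G where "G = Q4 (cnj g0) (- cnj g1) (- cnj g2) (- cnj g3)"
  define Q where "Q = qcnj X + v * G"
  have ZQ: "Z * Q = 0" by (simp add: Q_def distrib_left Z1 Z2 flip: mult.assoc)
  have "qre (X * v * G) = g0 * cnj g0 + g1 * cnj g1 + g2 * cnj g2 + g3 * cnj g3"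
    by (simp add: g G_def)
  also have "\<dots> = of_real ((cmod g0)^2 + (cmod g1)^2 + (cmod g2)^2 + (cmod g3)^2)"
    by (simp only: of_real_add complex_norm_square)
  finally have bre_eq: "qre (X * v * G) = of_real ((cmod g0)^2 + (cmod g1)^2 + (cmod g2)^2 + (cmod g3)^2)" .
  have "(cmod g0)^2 + (cmod g1)^2 + (cmod g2)^2 + (cmod g3)^2 \<noteq> 0"
  proof
    assume "(cmod g0)^2 + (cmod g1)^2 + (cmod g2)^2 + (cmod g3)^2 = 0"
    then have "g0 = 0 \<and> g1 = 0 \<and> g2 = 0 \<and> g3 = 0"
      by (smt (verit) norm_eq_zero power2_less_eq_zero_iff zero_le_power2)
    with g XvnZ show False by (simp add: Q4_0)
  qed
  with bre_eq have bre_nz: "qre (X * v * G) \<noteq> 0" by (metis of_real_eq_0_iff)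
  have "qnu Q = qnu (qcnj X) + qnu (v * G) + 2 * qdot (qcnj X) (v * G)"
    by (simp add: Q_def qnu_add)
  also have "\<dots> = 2 * qre (X * v * G)"
    by (simp add: qnu_cnj nX qnu_mult nv qdot_cnj mult.assoc)
  finally have nQ: "qnu Q \<noteq> 0" using bre_nz by simp
  have "qsc (qnu Q) * Z = 0"
    by (metis ZQ qsc_comm mult_qcnj mult.assoc mult_zero_left)
  then have Z0: "Z = 0" using nQ qsc_mult_zero by blast
  obtain x0 x1 x2 x3 where xe: "X = Q4 x0 x1 x2 x3" by (cases X)
  define s where "s = (cmod x0)^2 + (cmod x1)^2 + (cmod x2)^2 + (cmod x3)^2"
  have s_nz: "s \<noteq> 0"
  proof
    assume "s = 0"
    then have "x0 = 0 \<and> x1 = 0 \<and> x2 = 0 \<and> x3 = 0" unfolding s_def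
      by (smt (verit) norm_eq_zero power2_less_eq_zero_iff zero_le_power2)
    with xe Xnz show False by (simp add: Q4_0)
  qed
  define W where "W = qsc (1 / (2 * of_real s)) * Q4 (cnj x0) (cnj x1) (cnj x2) (cnj x3)"
  have "qdot X W = (x0 * cnj x0 + x1 * cnj x1 + x2 * cnj x2 + x3 * cnj x3) / (2 * of_real s)"
    by (simp add: xe W_def qsc_def add_divide_distrib)
  also have "x0 * cnj x0 + x1 * cnj x1 + x2 * cnj x2 + x3 * cnj x3 = of_real s"
    by (simp only: s_def of_real_add complex_norm_square)
  also have "of_real s / (2 * of_real s) = (1/2 :: complex)" using s_nz
    by simp
  finally have dXW: "qdot X W = 1/2" .
  have XW: "X * qcnj W = 1 - W * qcnj X"
    using polar[of X W] dXW by (simp add: eq_diff_eq)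
  define \<beta> where "\<beta> = - (qcnj W * Y)"
  have "(Y + X * \<beta>) * qcnj v = Y * u - (X * qcnj W) * Y * u"
    by (simp add: \<beta>_def u_def algebra_simps mult.assoc)
  also have "\<dots> = W * Z"
    by (simp add: XW Z_def algebra_simps mult.assoc)
  also have "\<dots> = 0" by (simp add: Z0)
  finally show ?thesis by blast
qed


definition qco :: "real poly q4 \<Rightarrow> nat \<Rightarrow> real q4" where "qco X i = qmap (\<lambda>f. coeff f i) X"
definition lowd :: "real poly q4 \<Rightarrow> nat \<Rightarrow> bool" where "lowd X n \<longleftrightarrow> (\<forall>i\<ge>n. qco X i = 0)"
definition monicd :: "real poly q4 \<Rightarrow> nat \<Rightarrow> bool" where
  "monicd X n \<longleftrightarrow> lowd X (Suc n) \<and> qco X n = 1"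

lemma qco_add: "qco (X + Y) i = qco X i + qco Y i"
  by (induct X; induct Y) (simp add: qco_def)
lemma qco_diff: "qco (X - Y) i = qco X i - qco Y i"
  by (induct X; induct Y) (simp add: qco_def Q4_minus)
lemma coeff_mult_const: "coeff (f * [:a:]) i = coeff f i * a" for f :: "real poly"
  by (simp add: mult_pCons_right mult.commute)
lemma qco_mult_qc: "qco (X * qc b) i = qco X i * b"
  by (induct X; induct b) (simp add: qco_def qc_def coeff_mult_const algebra_simps)
lemma coeff_mult_t: "coeff (f * [:0,1:]) (Suc i) = coeff f i" for f :: "real poly"
proof -
  have "f * [:0,1:] = pCons 0 f" by (simp add: mult.commute[of f])
  then show ?thesis by simp
qed
lemma qco_mult_T: "qco (X * T) (Suc i) = qco X i"
  by (induct X) (simp add: qco_def T_def qsc_def coeff_mult_t)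

lemma shift_step: "qco X (Suc i) = 0 \<Longrightarrow> qco (X * (T - qc p)) (Suc i) = qco X i"
  by (simp add: right_diff_distrib qco_diff qco_mult_T qco_mult_qc)

lemma lowd_bound: "\<exists>B. lowd X B"
proof (induct X)
  case (Q4 a b c d)
  define B where "B = Suc (degree a + degree b + degree c + degree d)"
  have "lowd (Q4 a b c d) B" unfolding lowd_def qco_def
    by (auto simp: B_def coeff_eq_0 Q4_0)
  then show ?case by blast
qed

lemma lowd_mono: "lowd X n \<Longrightarrow> n \<le> m \<Longrightarrow> lowd X m"
  by (auto simp: lowd_def)

lemma lowd_add: "lowd X n \<Longrightarrow> lowd Y n \<Longrightarrow> lowd (X + Y) n"
  by (simp add: lowd_def qco_add)

lemma lowd_mult_qc: "lowd X n \<Longrightarrow> lowd (X * qc b) n"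
  by (simp add: lowd_def qco_mult_qc)

lemma lowd_shift:
  assumes a: "lowd (X * (T - qc p)) (Suc s)"
  shows "lowd X s"
proof -
  obtain B where B: "lowd X B" using lowd_bound by blast
  have "\<forall>i. s \<le> i \<longrightarrow> B \<le> i + j \<longrightarrow> qco X i = 0" for j
  proof (induction j)
    case 0 then show ?case using B by (auto simp: lowd_def)
  next
    case (Suc j)
    show ?case
    proof (intro allI impI)
      fix i assume si: "s \<le> i" and Bi: "B \<le> i + Suc j"
      then have "qco X (Suc i) = 0" using Suc.IH by auto
      then have "qco X i = qco (X * (T - qc p)) (Suc i)" by (simp add: shift_step)
      also have "\<dots> = 0" using a si by (auto simp: lowd_def)
      finally show "qco X i = 0" .
    qed
  qed
  then show ?thesis unfolding lowd_def by (metis le_add2)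
qed

lemma monic_shift:
  assumes m: "monicd (X * (T - qc p)) (Suc d)"
  shows "monicd X d"
proof -
  have l: "lowd X (Suc d)" using m lowd_shift by (auto simp: monicd_def)
  then have "qco X (Suc d) = 0" by (simp add: lowd_def)
  then have "qco X d = qco (X * (T - qc p)) (Suc d)" by (simp add: shift_step)
  with m l show ?thesis by (simp add: monicd_def)
qed

lemma const_poly: "(\<forall>i\<ge>1. coeff f i = 0) \<Longrightarrow> f = [:coeff f 0:]"
  by (rule poly_eqI) (auto simp: coeff_pCons split: nat.split)

lemma monicd_0: "monicd P 0 \<Longrightarrow> P = 1"
proof (induct P)
  case (Q4 a b c d)
  then have l: "\<forall>i\<ge>1. coeff a i = 0 \<and> coeff b i = 0 \<and> coeff c i = 0 \<and> coeff d i = 0"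
    and c: "coeff a 0 = 1" "coeff b 0 = 0" "coeff c 0 = 0" "coeff d 0 = 0"
    by (auto simp: monicd_def lowd_def qco_def Q4_0 Q4_1)
  have "a = [:coeff a 0:]" "b = [:coeff b 0:]" "c = [:coeff c 0:]" "d = [:coeff d 0:]"
    using l by (auto intro!: const_poly)
  then show ?case using c by (simp add: Q4_1 one_pCons)
qed

lemma lowd_0: "lowd D 0 \<Longrightarrow> D = 0"
proof (induct D)
  case (Q4 a b c d)
  then have "\<forall>i. coeff a i = 0 \<and> coeff b i = 0 \<and> coeff c i = 0 \<and> coeff d i = 0"
    by (auto simp: lowd_def qco_def Q4_0)
  then show ?case by (simp add: Q4_0 poly_eq_iff)
qed

lemma coeff_sq:
  assumes "\<forall>i>k. coeff f i = 0"
  shows "coeff (f * f) (2*k) = coeff f k * coeff f k"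
proof -
  have "coeff (f * f) (2*k) = (\<Sum>i\<le>2*k. coeff f i * coeff f (2*k - i))"
    by (simp add: coeff_mult)
  also have "\<dots> = coeff f k * coeff f (2*k - k) + (\<Sum>i\<in>{..2*k} - {k}. coeff f i * coeff f (2*k - i))"
    by (subst sum.remove[of _ k]) auto
  also have "(\<Sum>i\<in>{..2*k} - {k}. coeff f i * coeff f (2*k - i)) = 0"
  proof (rule sum.neutral, intro ballI)
    fix i assume "i \<in> {..2*k} - {k}"
    then have "i > k \<or> 2*k - i > k" by auto
    then show "coeff f i * coeff f (2*k - i) = 0" using assms by auto
  qed
  finally show ?thesis by simp
qed

lemma monicd_norm:
  assumes m: "monicd P k" and k: "k > 0"
  shows "coeff (qnu P) (2*k) = 1"
proof (cases P)
  case (Q4 a b c d)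
  have l: "\<forall>i>k. coeff a i = 0 \<and> coeff b i = 0 \<and> coeff c i = 0 \<and> coeff d i = 0"
    and c: "coeff a k = 1" "coeff b k = 0" "coeff c k = 0" "coeff d k = 0"
    using m by (auto simp: Q4 monicd_def lowd_def qco_def Q4_0 Q4_1)
  show ?thesis using l c by (simp add: Q4 coeff_sq)
qed

section \<open>Niven\<close>

lemma qnu_hev: "qnu (hev l X) = cev l (qnu X)"
  by (induct X) (simp add: hev_def)
lemma qnu_ofr: "qnu (qmap complex_of_real x) = of_real (qnu x)"
  by (induct x) simp
lemma qdot_ofr: "qdot (qmap complex_of_real x) (qmap complex_of_real y) = of_real (qdot x y)"
  by (induct x; induct y) simp
lemma qnu_qsc_mult: "qnu (qsc c * x) = c * c * qnu x" for c :: "'a::idom"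
  by (induct x) (simp add: qsc_def algebra_simps)
lemma qdot_qsc_mult: "qdot y (qsc c * x) = c * qdot y x" for c :: "'a::idom"
  by (induct x; induct y) (simp add: qsc_def algebra_simps)
lemma qnu_qsc: "qnu (qsc c) = c * c"
  by (simp add: qsc_def)
lemma qsc_neg1: "qsc (-1) * x = - x"
  by (induct x) (simp add: qsc_def)
lemma qnu_real_zero: "qnu (x::real q4) = 0 \<Longrightarrow> x = 0"
proof (induct x)
  case (Q4 a b c d)
  have "a*a \<ge> 0" "b*b \<ge> 0" "c*c \<ge> 0" "d*d \<ge> 0" by simp_all
  moreover have "a*a + b*b + c*c + d*d = 0" using Q4 by simp
  ultimately have "a*a = 0" "b*b = 0" "c*c = 0" "d*d = 0" by linarith+
  then show ?case by (simp add: Q4_0)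
qed

lemma modlin:
  assumes "degree (N::real poly) = 2"
  shows "\<exists>q x y. f = q * N + [:x, y:]"
proof -
  define r where "r = f mod N"
  have N0: "N \<noteq> 0" using assms by auto
  have dr: "degree r \<le> 1"
  proof (cases "r = 0")
    case False then show ?thesis using degree_mod_less[OF N0, of f] assms by (simp add: r_def)
  qed simp
  have req: "r = [:coeff r 0, coeff r 1:]"
  proof (rule poly_eqI)
    fix n show "coeff r n = coeff [:coeff r 0, coeff r 1:] n"
      using dr by (cases n; cases "n - 1") (auto simp: coeff_eq_0)
  qed
  have "f = (f div N) * N + r" by (simp add: r_def)
  then show ?thesis using req by metis
qed

lemma niven:
  assumes ev: "\<And>f. cev l f = 0 \<longleftrightarrow> N dvd f" and Iml: "Im l \<noteq> 0"
    and Neq: "N = [:c0, b, 1:]"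
    and dvdn: "N dvd qnu P" and nd: "\<not> qdvd N P"
  obtains p P' where "P = P' * (T - qc p)" "(T - qc p) * qcnj (T - qc p) = qsc N"
proof -
  have degN: "degree N = 2" using Neq by simp
  have N0: "N \<noteq> 0" using degN by auto
  have Nl: "cev l N = 0" using ev by simp
  obtain f0 f1 f2 f3 where Pe: "P = Q4 f0 f1 f2 f3" by (cases P)
  obtain q0 x0 y0 where 0: "f0 = q0 * N + [:x0, y0:]" using modlin[OF degN] by blast
  obtain q1 x1 y1 where 1: "f1 = q1 * N + [:x1, y1:]" using modlin[OF degN] by blast
  obtain q2 x2 y2 where 2: "f2 = q2 * N + [:x2, y2:]" using modlin[OF degN] by blast
  obtain q3 x3 y3 where 3: "f3 = q3 * N + [:x3, y3:]" using modlin[OF degN] by blast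
  define A where "A = Q4 y0 y1 y2 y3"
  define C where "C = Q4 x0 x1 x2 x3"
  define Ac where "Ac = qmap complex_of_real A"
  define Cc where "Cc = qmap complex_of_real C"
  have hP: "hev l P = Cc + qsc l * Ac"
    by (simp add: Pe 0 1 2 3 hev_def Nl Ac_def Cc_def A_def C_def qsc_def mult.commute)
  have "qnu (hev l P) = 0" using dvdn ev by (simp add: qnu_hev)
  then have "qnu Cc + l * l * qnu Ac + 2 * (l * qdot Cc Ac) = 0"
    by (simp add: hP qnu_add qnu_qsc_mult qdot_qsc_mult)
  then have e1: "of_real (qnu C) + l * l * of_real (qnu A) + 2 * l * of_real (qdot C A) = 0"
    by (simp add: Ac_def Cc_def qnu_ofr qdot_ofr mult.assoc)
  have ll: "l * l = - of_real c0 - of_real b * l"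
    using Nl by (simp add: Neq algebra_simps eq_neg_iff_add_eq_0)
  have "of_real (qnu C - c0 * qnu A) + of_real (2 * qdot C A - b * qnu A) * l = 0"
    using e1 unfolding ll by (simp add: algebra_simps)
  from real_lin_zero[OF Iml this]
  have g: "qnu C = c0 * qnu A" and be: "2 * qdot C A = b * qnu A" by simp_all
  have a0: "qnu A \<noteq> 0"
  proof
    assume "qnu A = 0"
    then have "A = 0" "C = 0" using g qnu_real_zero by auto
    then have "y0 = 0 \<and> y1 = 0 \<and> y2 = 0 \<and> y3 = 0 \<and> x0 = 0 \<and> x1 = 0 \<and> x2 = 0 \<and> x3 = 0"
      by (simp_all add: A_def C_def Q4_0)
    then have "qdvd N P" by (simp add: Pe 0 1 2 3 qdvd_iff)
    with nd show False by simp
  qed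
  define \<alpha> where "\<alpha> = qnu A"
  define p where "p = qsc (- 1 / \<alpha>) * (qcnj A * C)"
  have qnup: "qnu p = c0"
    using a0 by (simp add: p_def qnu_qsc qnu_mult qnu_cnj g \<alpha>_def field_simps)
  have qrep: "qre p = - b / 2"
  proof -
    have "qre (qcnj A * C) = qdot A C" using qdot_cnj[of "qcnj A" C] by simp
    also have "\<dots> = qdot C A" by (induct A; induct C) (simp add: algebra_simps)
    finally have "qre (qcnj A * C) = qdot C A" .
    moreover have "qre (qsc c * x) = c * qre x" for c :: real and x
      by (induct x) (simp add: qsc_def)
    ultimately show ?thesis using a0 be by (simp add: p_def \<alpha>_def field_simps)
  qed
  have LN: "(T - qc p) * qcnj (T - qc p) = qsc N"
    by (simp add: L_norm qnup qrep Neq)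
  have Ap: "A * p = - C"
  proof -
    have "A * p = qsc (- 1 / \<alpha>) * ((A * qcnj A) * C)"
      by (simp add: p_def mult.assoc qsc_comm[of _ A] flip: mult.assoc)
    also have "\<dots> = - C" using a0 by (simp add: mult_qcnj qsc_mult \<alpha>_def qsc_neg1 flip: mult.assoc)
    finally show ?thesis .
  qed
  have hL: "hev l (T - qc p) = qsc l - qmap of_real p"
    by (simp add: hev_diff hev_T hev_qc)
  have "hev l P = Ac * hev l (T - qc p)"
  proof -
    have "Cc = - (Ac * qmap of_real p)"
      by (simp add: Cc_def Ac_def ofr_mult[symmetric] Ap) (induct C, simp)
    then show ?thesis by (simp add: hP hL right_diff_distrib qsc_comm)
  qed
  then have "hev l P * hev l (qcnj (T - qc p)) = Ac * hev l ((T - qc p) * qcnj (T - qc p))"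
    by (simp add: hev_mult mult.assoc)
  also have "\<dots> = 0" by (simp add: LN hev_sc Nl)
  finally obtain P' where "P = P' * (T - qc p)" using right_div[OF ev N0 LN] by blast
  with LN show ?thesis using that by blast
qed


lemma qdot_hev: "qdot (hev l X) (hev l Y) = cev l (qdot X Y)"
  by (induct X; induct Y) (simp add: hev_def)

lemma dual_step:
  assumes ev: "\<And>f. cev l f = 0 \<longleftrightarrow> N dvd f" and Iml: "Im l \<noteq> 0" and N0: "N \<noteq> 0"
    and LN: "(T - qc p) * qcnj (T - qc p) = qsc N"
    and PP: "P = P' * (T - qc p)"
    and hP: "hev l P \<noteq> 0" and hP': "hev l P' \<noteq> 0"
    and cond: "qnu (hev l P') \<noteq> 0 \<or> cev l (qdot P D) = 0"
  shows "\<exists>b D'. D + P' * qc b = D' * (T - qc p)"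
proof -
  define L where "L = T - qc p"
  define X where "X = hev l P'"
  define v where "v = hev l L"
  define Y where "Y = hev l D"
  have Nl: "cev l N = 0" using ev by simp
  have "v * qcnj v = hev l (L * qcnj L)" by (simp add: v_def hev_cnj hev_mult)
  also have "\<dots> = 0" using LN by (simp add: L_def hev_sc Nl)
  finally have nv: "qnu v = 0" by (simp add: mult_qcnj)
  have Xv: "X * v = hev l P" by (simp add: X_def v_def L_def PP hev_mult)
  have pol: "(X*v) * qcnj Y + Y * qcnj (X*v) = qsc (2 * cev l (qdot P D))"
    by (simp add: Xv Y_def polar qdot_hev)
  have c: "qnu X \<noteq> 0 \<or> (X*v) * qcnj Y + Y * qcnj (X*v) = 0" using cond pol by (auto simp: X_def)
  have Xnz: "X \<noteq> 0" using hP' by (simp add: X_def)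
  obtain \<beta> where \<beta>: "(Y + X*\<beta>) * qcnj v = 0"
    using core_cq[OF nv _ Xnz c] Xv hP by auto
  obtain B0 B1 where B: "\<beta> = qmap of_real B0 + qsc l * qmap of_real B1"
    using qdecomp[OF Iml] by blast
  define b where "b = B1 * p + B0"
  have vv: "v = qsc l - qmap of_real p" by (simp add: v_def L_def hev_diff hev_T hev_qc)
  have \<beta>e: "\<beta> = qmap of_real B1 * v + qmap of_real b"
    by (simp add: B vv b_def ofr_add ofr_mult right_diff_distrib qsc_comm)
  have "(Y + X * qmap of_real b) * qcnj v = (Y + X*\<beta>) * qcnj v - X * qmap of_real B1 * (v * qcnj v)"
    by (simp add: \<beta>e algebra_simps mult.assoc)
  also have "\<dots> = 0" using \<beta> by (simp add: mult_qcnj nv)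
  finally have "hev l (D + P' * qc b) * hev l (qcnj L) = 0"
    by (simp add: hev_add hev_mult hev_qc hev_cnj Y_def X_def v_def)
  from right_div[OF ev N0 LN[folded L_def] this] obtain D' where "D + P' * qc b = D' * L" by blast
  then show ?thesis by (auto simp: L_def)
qed

definition mrpfq :: "real poly q4 \<Rightarrow> bool" where
  "mrpfq P \<longleftrightarrow> \<not>(\<exists>c S. degree c > 0 \<and> P = qsc c * S)"

fun dmul :: "(real poly q4 \<times> real poly q4) \<Rightarrow> (real poly q4 \<times> real poly q4) \<Rightarrow> (real poly q4 \<times> real poly q4)"
  where "dmul (P, D) (P', D') = (P * P', P * D' + D * P')"
definition lfq :: "real q4 \<Rightarrow> real q4 \<Rightarrow> real poly q4 \<times> real poly q4" where
  "lfq p b = (T - qc p, - qc b)"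
fun lpq :: "(real q4 \<times> real q4) list \<Rightarrow> real poly q4 \<times> real poly q4" where
  "lpq [] = (1, 0)" | "lpq ((p,b) # hs) = dmul (lfq p b) (lpq hs)"

lemma dmul_assoc: "dmul (dmul x y) z = dmul x (dmul y z)"
  by (cases x; cases y; cases z) (simp add: algebra_simps mult.assoc)
lemma dmul_1_right: "dmul x (1,0) = x" by (cases x) simp
lemma dmul_1_left: "dmul (1,0) x = x" by (cases x) simp

lemma lpq_snoc: "lpq (hs @ [(p,b)]) = dmul (lpq hs) (lfq p b)"
proof (induction hs)
  case Nil then show ?case by (simp add: dmul_1_right dmul_1_left)
next
  case (Cons h hs) then show ?case by (cases h) (simp add: dmul_assoc)
qed

lemma prod_dvd_coprime:
  fixes f :: "nat \<Rightarrow> 'a::factorial_semiring_gcd"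
  shows "(\<forall>i<m. \<forall>j<m. i \<noteq> j \<longrightarrow> coprime (f i) (f j)) \<Longrightarrow> (\<forall>i<m. f i dvd x) \<Longrightarrow> (\<Prod>i<m. f i) dvd x"
proof (induction m)
  case 0 then show ?case by simp
next
  case (Suc m)
  have "(\<Prod>i<m. f i) dvd x" using Suc by auto
  moreover have "f m dvd x" using Suc by auto
  moreover have "coprime (\<Prod>i<m. f i) (f m)"
    using Suc.prems(1) by (intro prod_coprime_left) auto
  ultimately show ?case by (simp add: divides_mult)
qed


lemma main_ind:
  fixes N :: "nat \<Rightarrow> real poly" and m :: nat
  assumes Nirr: "\<forall>i<m. irreducible (N i)" and Nmon: "\<forall>i<m. lead_coeff (N i) = 1"
    and Ndeg: "\<forall>i<m. degree (N i) = 2"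
    and Ncop: "\<forall>i<m. \<forall>j<m. i \<noteq> j \<longrightarrow> coprime (N i) (N j)"
  shows "monicd P d \<Longrightarrow> lowd D d \<Longrightarrow> mrpfq P \<Longrightarrow> qnu P = (\<Prod>i<m. N i ^ n i)
    \<Longrightarrow> (\<Prod>i<m. N i ^ (n i - 1)) dvd qdot P D \<Longrightarrow> \<exists>hs. (P, D) = lpq hs"
proof (induction d arbitrary: P D n)
  case 0
  then have "P = 1" "D = 0" using monicd_0 lowd_0 by auto
  then show ?case by (intro exI[of _ "[]"]) simp
next
  case (Suc d)
  have "\<exists>i0<m. n i0 > 0"
  proof (rule ccontr)
    assume "\<not> (\<exists>i0<m. n i0 > 0)"
    then have "qnu P = 1" using Suc.prems(4) by simp
    moreover have "coeff (qnu P) (2 * Suc d) = 1" using monicd_norm[OF Suc.prems(1)] by simp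
    ultimately show False by simp
  qed
  then obtain i0 where i0: "i0 < m" "n i0 > 0" by blast
  define Nn where "Nn = N i0"
  have degN: "degree Nn = 2" using Ndeg i0 by (simp add: Nn_def)
  have N0: "Nn \<noteq> 0" using degN by auto
  obtain l where Iml: "Im l \<noteq> 0" and ev: "\<And>f. cev l f = 0 \<longleftrightarrow> Nn dvd f"
    and Neq: "Nn = [:coeff Nn 0, coeff Nn 1, 1:]"
    using root_exists[of Nn] Nirr Nmon Ndeg i0 unfolding Nn_def by blast
  have split: "(\<Prod>i<m. g i) = g i0 * (\<Prod>i\<in>{..<m}-{i0}. g i)" for g :: "nat \<Rightarrow> real poly"
    using i0 by (subst prod.remove[of _ i0]) auto
  have dvdn: "Nn dvd qnu P"
  proof -
    have "Nn dvd N i0 ^ n i0" using i0 by (simp add: Nn_def dvd_power)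
    then show ?thesis by (simp add: Suc.prems(4) split[of "\<lambda>i. N i ^ n i"])
  qed
  have nd: "\<not> qdvd Nn P"
  proof
    assume "qdvd Nn P"
    then obtain S where "P = qsc Nn * S" by (auto simp: qdvd_def)
    then show False using Suc.prems(3) degN unfolding mrpfq_def by force
  qed
  obtain p P' where PP: "P = P' * (T - qc p)" and LN: "(T - qc p) * qcnj (T - qc p) = qsc Nn"
    using niven[OF ev Iml Neq dvdn nd] by blast
  define L where "L = T - qc p"
  have nuL: "qnu L = Nn" using LN by (simp add: L_def mult_qcnj)
  have mP': "monicd P' d" using monic_shift Suc.prems(1) PP by simp
  have mrP': "mrpfq P'"
    unfolding mrpfq_def
  proof
    assume "\<exists>c S. degree c > 0 \<and> P' = qsc c * S"
    then obtain c S where "degree c > 0" "P' = qsc c * S" by blast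
    then have "degree c > 0 \<and> P = qsc c * (S * (T - qc p))" using PP by (simp add: mult.assoc)
    then show False using Suc.prems(3) unfolding mrpfq_def by blast
  qed
  define n' where "n' = n(i0 := n i0 - 1)"
  have prodA: "(\<Prod>i<m. N i ^ n i) = Nn * (\<Prod>i<m. N i ^ n' i)"
  proof -
    have "(\<Prod>i\<in>{..<m}-{i0}. N i ^ n i) = (\<Prod>i\<in>{..<m}-{i0}. N i ^ n' i)"
      by (rule prod.cong) (auto simp: n'_def)
    moreover have "N i0 ^ n i0 = Nn * N i0 ^ n' i0" using i0
      by (cases "n i0") (auto simp: n'_def Nn_def)
    ultimately show ?thesis
      by (simp add: split[of "\<lambda>i. N i ^ n i"] split[of "\<lambda>i. N i ^ n' i"] mult.assoc)
  qed
  have nuP': "qnu P' = (\<Prod>i<m. N i ^ n' i)"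
  proof -
    have "Nn * qnu P' = Nn * (\<Prod>i<m. N i ^ n' i)"
      using Suc.prems(4) PP by (simp add: qnu_mult prodA nuL[unfolded L_def] mult.commute)
    then show ?thesis using N0 by simp
  qed
  have hP: "hev l P \<noteq> 0" using nd hev_zero_dvd[OF ev] by blast
  have hP': "hev l P' \<noteq> 0"
  proof
    assume "hev l P' = 0"
    then have "qdvd Nn P'" by (rule hev_zero_dvd[OF ev])
    then obtain S where "P' = qsc Nn * S" by (auto simp: qdvd_def)
    then have "qdvd Nn P" using PP by (auto simp: qdvd_def mult.assoc)
    with nd show False by simp
  qed
  define Q where "Q = (\<Prod>i<m. N i ^ (n i - 1))"
  define Q' where "Q' = (\<Prod>i<m. N i ^ (n' i - 1))"
  have QP: "Q dvd qdot P D" using Suc.prems(5) by (simp add: Q_def)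
  have cond: "qnu (hev l P') \<noteq> 0 \<or> cev l (qdot P D) = 0"
  proof (cases "n i0 = 1")
    case True
    have cc: "coprime Nn (N i ^ n' i)" if "i \<in> {..<m}" for i
      using that Ncop[rule_format, of i0 i] i0 True by (cases "i = i0") (auto simp: n'_def Nn_def)
    have "coprime Nn (\<Prod>i<m. N i ^ n' i)"
      using cc prod_coprime_right[of "{..<m}" Nn "\<lambda>i. N i ^ n' i"] by blast
    moreover have "\<not> is_unit Nn" using degN by (intro not_unit_deg) simp
    ultimately have "\<not> Nn dvd qnu P'" using nuP' by (metis coprime_absorb_left)
    then show ?thesis by (simp add: qnu_hev ev)
  next
    case False
    then have "n i0 - 1 > 0" using i0 by simp
    then have "Nn dvd N i0 ^ (n i0 - 1)" by (simp add: Nn_def dvd_power)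
    then have "Nn dvd Q" unfolding Q_def split[of "\<lambda>i. N i ^ (n i - 1)"] by (rule dvd_mult2)
    then show ?thesis using QP ev dvd_trans by blast
  qed
  obtain b D' where bD: "D + P' * qc b = D' * L"
    using dual_step[OF ev Iml N0 LN PP hP hP' cond] by (auto simp: L_def)
  have lowD': "lowd D' d"
  proof -
    have "lowd (P' * qc b) (Suc d)" using mP' by (intro lowd_mult_qc) (simp add: monicd_def)
    then have "lowd (D' * L) (Suc d)" using Suc.prems(2) bD[symmetric] lowd_add by simp
    then show ?thesis using lowd_shift by (simp add: L_def)
  qed
  have Deq: "D = P' * (- qc b) + D' * L" using bD by (simp add: algebra_simps)
  have dot: "qdot P D = qdot P' D' * Nn + qnu P' * qdot L (- qc b)"
    using dual_norm_mult[of P' L "- qc b" D'] PP Deq nuL by (simp add: L_def)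
  have QA: "Q dvd qnu P'" unfolding Q_def nuP'
    by (rule prod_dvd_prod) (auto simp: n'_def intro!: le_imp_power_dvd)
  have QD: "Q dvd qdot P' D' * Nn"
    using QP QA unfolding dot by (metis dvd_add_left_iff dvd_mult2)
  have Q'D: "Q' dvd qdot P' D'"
  proof (cases "n i0 = 1")
    case True
    have QQ: "Q = Q'" unfolding Q_def Q'_def
      by (rule prod.cong) (auto simp: n'_def True)
    have "coprime Q Nn" unfolding Q_def
    proof (rule prod_coprime_left)
      fix i assume "i \<in> {..<m}"
      then show "coprime (N i ^ (n i - 1)) Nn"
        using Ncop[rule_format, of i i0] i0 True by (cases "i = i0") (auto simp: Nn_def)
    qed
    then show ?thesis using QD QQ by (simp add: coprime_dvd_mult_left_iff)
  next
    case False
    have "Q = Nn * Q'"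
    proof -
      have e1: "(\<Prod>i\<in>{..<m}-{i0}. N i ^ (n i - 1)) = (\<Prod>i\<in>{..<m}-{i0}. N i ^ (n' i - 1))"
        by (rule prod.cong) (auto simp: n'_def)
      have e2: "N i0 ^ (n i0 - 1) = Nn * N i0 ^ (n' i0 - 1)" using i0 False
        by (cases "n i0 - 1") (auto simp: n'_def Nn_def)
      show ?thesis
        unfolding Q_def Q'_def split[of "\<lambda>i. N i ^ (n i - 1)"] split[of "\<lambda>i. N i ^ (n' i - 1)"]
        by (simp only: e1 e2 mult.assoc)
    qed
    then show ?thesis using QD N0 by (simp add: mult.commute[of Nn])
  qed
  obtain hs' where hs': "(P', D') = lpq hs'"
    using Suc.IH[OF mP' lowD' mrP' nuP'] Q'D by (auto simp: Q'_def)
  have "lpq (hs' @ [(p,b)]) = (P, D)"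
    by (simp add: lpq_snoc hs'[symmetric] lfq_def PP Deq L_def)
  then show ?case by metis
qed


lemma L_nu: "qnu (T - qc p) = [:qnu p, - 2 * qre p, 1:]"
  using L_norm[of p] by (simp add: mult_qcnj)

lemma fwd_inv:
  fixes q :: "real poly"
  assumes pq: "prime_elem q" and dq: "degree q \<ge> 2"
  shows "q ^ Suc k dvd qnu (fst (lpq hs)) \<Longrightarrow> q ^ k dvd qdot (fst (lpq hs)) (snd (lpq hs))"
proof (induction hs arbitrary: k)
  case Nil then show ?case by (simp add: Q4_0 Q4_1)
next
  case (Cons h hs)
  obtain p b where h: "h = (p,b)" by (cases h)
  obtain P D where PD: "lpq hs = (P, D)" by (cases "lpq hs")
  define L where "L = T - qc p"
  define NL where "NL = qnu L"
  have lp: "lpq (h # hs) = (L * P, L * D + (- qc b) * P)" by (simp add: h PD lfq_def L_def)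
  have nu: "qnu (L * P) = NL * qnu P" by (simp add: qnu_mult NL_def)
  have dt: "qdot (L * P) (L * D + (- qc b) * P) = qdot L (- qc b) * qnu P + NL * qdot P D"
    using dual_norm_mult[of L P D "- qc b"] by (simp add: NL_def)
  have NLeq: "NL = [:qnu p, - 2 * qre p, 1:]" by (simp add: NL_def L_def L_nu)
  have NL0: "NL \<noteq> 0" and dNL: "degree NL = 2" by (simp_all add: NLeq)
  have IH: "q ^ Suc j dvd qnu P \<Longrightarrow> q ^ j dvd qdot P D" for j using Cons.IH[of j] PD by simp
  have hyp: "q ^ Suc k dvd NL * qnu P" using Cons.prems lp nu by simp
  have q0: "q \<noteq> 0" using pq by auto
  have nsq: "\<not> q * q dvd NL"
  proof
    assume "q * q dvd NL"
    then have "degree (q*q) \<le> degree NL" using NL0 by (rule dvd_imp_degree_le)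
    then show False using dq dNL q0 by (simp add: degree_mult_eq)
  qed
  show ?case
  proof (cases k)
    case 0 then show ?thesis by simp
  next
    case (Suc k')
    have main: "q ^ k dvd qnu P \<and> q ^ k dvd NL * qdot P D"
    proof (cases "q dvd NL")
      case True
      then obtain c where c: "NL = q * c" by (elim dvdE)
      have nqc: "\<not> q dvd c" using nsq c by auto
      have "q * q ^ k dvd q * (c * qnu P)" using hyp c by (simp add: mult.assoc)
      then have "q ^ k dvd c * qnu P" using q0 by simp
      moreover have "coprime (q ^ k) c"
        using prime_elem_imp_coprime[OF pq nqc] by simp
      ultimately have A: "q ^ k dvd qnu P" by (simp add: coprime_dvd_mult_right_iff)
      have "q ^ k' dvd qdot P D" using IH[of k'] A Suc by simp
      then have "q * q ^ k' dvd NL * qdot P D" using c by (simp add: mult_dvd_mono)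
      with A show ?thesis using Suc by simp
    next
      case False
      have "coprime (q ^ Suc k) NL"
        using prime_elem_imp_coprime[OF pq False] by simp
      then have A: "q ^ Suc k dvd qnu P" using hyp by (simp add: coprime_dvd_mult_right_iff)
      have "q ^ k dvd qnu P" using A by (meson dvd_trans le_imp_power_dvd le_SucI order_refl)
      moreover have "q ^ k dvd qdot P D" using IH[OF A] .
      ultimately show ?thesis by simp
    qed
    then show ?thesis using lp dt by (simp add: dvd_add)
  qed
qed


fun fq :: "quat \<Rightarrow> real q4" where "fq (Quat a b c d) = Q4 a b c d"
fun qq :: "real q4 \<Rightarrow> quat" where "qq (Q4 a b c d) = Quat a b c d"
fun un :: "dquat \<Rightarrow> real q4 \<times> real q4" where "un (DQuat a b) = (fq a, fq b)"
lemma fq_qq[simp]: "fq (qq p) = p" by (cases p) simp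

lemma ofq_mult: "ofq (A * C) = hp_mult (ofq A) (ofq C)"
  by (metis toq_mult toq_ofq ofq_toq)
lemma ofq_add: "ofq (A + C) = hp_add (ofq A) (ofq C)"
  by (metis toq_add toq_ofq ofq_toq)

lemma lin_factor_eq:
  "lin_factor h = DHP (ofq (fst (lfq (fst (un h)) (snd (un h))))) (ofq (snd (lfq (fst (un h)) (snd (un h)))))"
proof -
  obtain a b where h: "h = DQuat a b" by (cases h)
  obtain a0 a1 a2 a3 where a: "a = Quat a0 a1 a2 a3" by (cases a)
  obtain b0 b1 b2 b3 where b: "b = Quat b0 b1 b2 b3" by (cases b)
  show ?thesis
    by (simp add: h a b lfq_def T_def qc_def qsc_def Q4_minus diff_pCons)
qed

lemma lin_prod_lpq:
  "lin_prod hs = DHP (ofq (fst (lpq (map un hs)))) (ofq (snd (lpq (map un hs))))"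
proof (induction hs)
  case Nil
  then show ?case by (simp add: lin_prod_def dhp_one_def hp_one_def hp_zero_def Q4_0 Q4_1)
next
  case (Cons h hs)
  obtain p b where u: "un h = (p, b)" by (cases "un h")
  obtain P D where PD: "lpq (map un hs) = (P, D)" by (cases "lpq (map un hs)")
  have "lin_prod (h # hs) = dhp_mult (lin_factor h) (lin_prod hs)"
    by (simp add: lin_prod_def)
  also have "\<dots> = DHP (ofq (fst (lfq p b) * P)) (ofq (fst (lfq p b) * D + snd (lfq p b) * P))"
    by (simp add: Cons lin_factor_eq u PD ofq_mult ofq_add)
  also have "\<dots> = DHP (ofq (fst (lpq (map un (h # hs))))) (ofq (snd (lpq (map un (h # hs)))))"
    by (cases "lfq p b") (simp add: u PD)
  finally show ?case .
qed

lemma un_map: "map un (map (\<lambda>(p,b). DQuat (qq p) (qq b)) hs) = hs"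
  by (induction hs) auto

lemma monic_conv:
  assumes m: "dhp_monic (DHP P D)"
  shows "monicd (toq P) (dhp_degree (DHP P D)) \<and> lowd (toq D) (dhp_degree (DHP P D))"
proof -
  obtain p0 p1 p2 p3 where P: "P = HP p0 p1 p2 p3" by (cases P)
  obtain d0 d1 d2 d3 where D: "D = HP d0 d1 d2 d3" by (cases D)
  define dd where "dd = dhp_degree (DHP P D)"
  have dd: "dd = Max {degree p0, degree p1, degree p2, degree p3, degree d0, degree d1, degree d2, degree d3}"
    by (simp only: dd_def P D dhp_degree.simps)
  have fin: "finite {degree p0, degree p1, degree p2, degree p3, degree d0, degree d1, degree d2, degree d3}"
    by simp
  have le: "degree p0 \<le> dd" "degree p1 \<le> dd" "degree p2 \<le> dd" "degree p3 \<le> dd"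
    "degree d0 \<le> dd" "degree d1 \<le> dd" "degree d2 \<le> dd" "degree d3 \<le> dd"
    unfolding dd by (rule Max_ge[OF fin]; simp)+
  have m': "dhp_coeff (DHP (HP p0 p1 p2 p3) (HP d0 d1 d2 d3)) dd = DQuat (Quat 1 0 0 0) (Quat 0 0 0 0)"
    using m unfolding dhp_monic_def dd_def P D .
  have c: "coeff p0 dd = 1" "coeff p1 dd = 0" "coeff p2 dd = 0" "coeff p3 dd = 0"
    "coeff d0 dd = 0" "coeff d1 dd = 0" "coeff d2 dd = 0" "coeff d3 dd = 0"
    using m' by (simp_all only: dhp_coeff.simps dquat.inject quat.inject)
  have z: "i > dd \<Longrightarrow> coeff p0 i = 0 \<and> coeff p1 i = 0 \<and> coeff p2 i = 0 \<and> coeff p3 i = 0 \<and>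
    coeff d0 i = 0 \<and> coeff d1 i = 0 \<and> coeff d2 i = 0 \<and> coeff d3 i = 0" for i
    using le by (simp add: coeff_eq_0)
  have "lowd (toq P) (Suc dd)" unfolding lowd_def qco_def
  proof (intro allI impI)
    fix i assume "Suc dd \<le> i"
    then have "i > dd" by simp
    from z[OF this] show "qmap (\<lambda>f. coeff f i) (toq P) = 0" by (simp add: P Q4_0)
  qed
  moreover have "qco (toq P) dd = 1" using c by (simp add: qco_def P Q4_1)
  ultimately have "monicd (toq P) dd" by (simp add: monicd_def)
  moreover have "lowd (toq D) dd"
    unfolding lowd_def qco_def
  proof (intro allI impI)
    fix i assume "dd \<le> i"
    then consider "i = dd" | "i > dd" by linarith
    then show "qmap (\<lambda>f. coeff f i) (toq D) = 0"
    proof cases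
      case 1 then show ?thesis using c by (simp add: D Q4_0)
    next
      case 2 from z[OF this] show ?thesis by (simp add: D Q4_0)
    qed
  qed
  ultimately show ?thesis by (simp add: dd_def)
qed

theorem theorem1:
  fixes P D :: hpoly and m :: nat and N :: "nat \<Rightarrow> real poly" and n :: "nat \<Rightarrow> nat"
  assumes monic: "dhp_monic (DHP P D)"
    and mrpf: "mrpf_one P"
    and N_irr: "\<forall>i<m. irreducible (N i)"
    and N_monic: "\<forall>i<m. lead_coeff (N i) = 1"
    and N_deg: "\<forall>i<m. degree (N i) = 2"
    and N_coprime: "\<forall>i<m. \<forall>j<m. i \<noteq> j \<longrightarrow> coprime (N i) (N j)"
    and n_pos: "\<forall>i<m. n i > 0"
    and norm_fac: "hp_mult P (hp_cnj P) = hp_of_real (\<Prod>i<m. N i ^ n i)"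
  shows "((\<exists>hs. DHP P D = lin_prod hs) \<longleftrightarrow>
            (\<exists>a b. dhp_mult (DHP P D) (dhp_cnj (DHP P D))
                     = dhp_of_dual ((\<Prod>i<m. N i ^ (n i - 1)) * a) ((\<Prod>i<m. N i ^ (n i - 1)) * b)))
       \<and> ((\<exists>hs. DHP P D = lin_prod hs) \<longleftrightarrow>
            (\<exists>r. hp_add (hp_mult P (hp_cnj D)) (hp_mult D (hp_cnj P))
                   = hp_of_real ((\<Prod>i<m. N i ^ (n i - 1)) * r)))"
proof -
  define Q where "Q = (\<Prod>i<m. N i ^ (n i - 1))"
  define Pq where "Pq = toq P"
  define Dq where "Dq = toq D"
  have hreal_inj: "hp_of_real x = hp_of_real y \<longleftrightarrow> x = y" for x y
    by (metis toq_real qsc_inj)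
  have nuP: "qnu Pq = (\<Prod>i<m. N i ^ n i)"
  proof -
    have "qsc (qnu Pq) = toq (hp_mult P (hp_cnj P))"
      by (simp add: Pq_def toq_mult toq_cnj mult_qcnj)
    also have "\<dots> = qsc (\<Prod>i<m. N i ^ n i)" by (simp add: norm_fac toq_real)
    finally show ?thesis by simp
  qed
  have dualq: "toq (hp_add (hp_mult P (hp_cnj D)) (hp_mult D (hp_cnj P))) = qsc (2 * qdot Pq Dq)"
    by (simp add: toq_add toq_mult toq_cnj polar Pq_def Dq_def)
  have unit2: "is_unit (2::real poly)"
    by (simp add: is_unit_iff_degree)
  have R2: "(\<exists>r. hp_add (hp_mult P (hp_cnj D)) (hp_mult D (hp_cnj P)) = hp_of_real (Q * r))
      \<longleftrightarrow> Q dvd qdot Pq Dq"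
  proof -
    have "(\<exists>r. hp_add (hp_mult P (hp_cnj D)) (hp_mult D (hp_cnj P)) = hp_of_real (Q * r))
        \<longleftrightarrow> (\<exists>r. 2 * qdot Pq Dq = Q * r)"
      by (metis dualq toq_real qsc_inj toq_inj)
    also have "\<dots> \<longleftrightarrow> Q dvd 2 * qdot Pq Dq" by (auto simp: dvd_def)
    also have "\<dots> \<longleftrightarrow> Q dvd qdot Pq Dq" using unit2 by (simp add: dvd_mult_unit_iff')
    finally show ?thesis .
  qed
  have prodQ: "(\<Prod>i<m. N i ^ n i) = Q * (\<Prod>i<m. N i)"
  proof -
    have "(\<Prod>i<m. N i ^ n i) = (\<Prod>i<m. N i ^ (n i - 1) * N i)"
      by (rule prod.cong) (use n_pos in \<open>auto simp: power_Suc2[symmetric]\<close>)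
    then show ?thesis by (simp add: Q_def prod.distrib)
  qed
  have R1: "(\<exists>a b. dhp_mult (DHP P D) (dhp_cnj (DHP P D)) = dhp_of_dual (Q * a) (Q * b))
      \<longleftrightarrow> (\<exists>r. hp_add (hp_mult P (hp_cnj D)) (hp_mult D (hp_cnj P)) = hp_of_real (Q * r))"
  proof -
    have "dhp_mult (DHP P D) (dhp_cnj (DHP P D)) =
        DHP (hp_mult P (hp_cnj P)) (hp_add (hp_mult P (hp_cnj D)) (hp_mult D (hp_cnj P)))"
      by simp
    then show ?thesis
      by (auto simp: dhp_of_dual_def norm_fac hreal_inj prodQ)
  qed
  have LHS: "(\<exists>hs. DHP P D = lin_prod hs) \<longleftrightarrow> Q dvd qdot Pq Dq"
  proof
    assume "\<exists>hs. DHP P D = lin_prod hs"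
    then obtain hs where hs: "DHP P D = lin_prod hs" by blast
    define hq where "hq = map un hs"
    have PD: "Pq = fst (lpq hq)" "Dq = snd (lpq hq)"
      using hs by (simp_all add: lin_prod_lpq hq_def Pq_def Dq_def)
    have "N i ^ (n i - 1) dvd qdot Pq Dq" if i: "i < m" for i
    proof -
      have pe: "prime_elem (N i)" using N_irr i by (simp add: irreducible_imp_prime_elem)
      have e: "N i ^ Suc (n i - 1) = N i ^ n i" using n_pos i by simp
      have "N i ^ n i dvd (\<Prod>i<m. N i ^ n i)" using i by (intro dvd_prodI) auto
      then have "N i ^ Suc (n i - 1) dvd qnu Pq" by (simp only: e nuP)
      then show ?thesis using fwd_inv[OF pe] N_deg i PD by simp
    qed
    moreover have "\<forall>i<m. \<forall>j<m. i \<noteq> j \<longrightarrow> coprime (N i ^ (n i - 1)) (N j ^ (n j - 1))"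
      using N_coprime by simp
    ultimately show "Q dvd qdot Pq Dq" unfolding Q_def
      by (intro prod_dvd_coprime) auto
  next
    assume Qd: "Q dvd qdot Pq Dq"
    have mc: "monicd Pq (dhp_degree (DHP P D))" "lowd Dq (dhp_degree (DHP P D))"
      using monic_conv[OF monic] by (simp_all add: Pq_def Dq_def)
    have mr: "mrpfq Pq"
      unfolding mrpfq_def
    proof
      assume "\<exists>c S. degree c > 0 \<and> Pq = qsc c * S"
      then obtain c S where "degree c > 0" "Pq = qsc c * S" by blast
      then have "degree c > 0 \<and> P = hp_scale c (ofq S)"
        by (metis Pq_def toq_scale toq_ofq toq_inj)
      with mrpf show False unfolding mrpf_one_def by blast
    qed
    obtain hq where hq: "(Pq, Dq) = lpq hq"
      using main_ind[OF N_irr N_monic N_deg N_coprime mc mr nuP] Qd by (auto simp: Q_def)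
    define hs where "hs = map (\<lambda>(p,b). DQuat (qq p) (qq b)) hq"
    have mu: "map un hs = hq" by (simp only: hs_def un_map)
    have "lin_prod hs = DHP P D"
      by (simp only: lin_prod_lpq mu hq[symmetric] Pq_def Dq_def fst_conv snd_conv ofq_toq)
    then show "\<exists>hs. DHP P D = lin_prod hs" by metis
  qed
  show ?thesis using LHS R1 R2 by (simp add: Q_def)
qed


end
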